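(* Let $p=(p_1,\ldots,p_m)$ be p-values for hypotheses $H_1,\dots,H_m$ with set of true nulls $\mathcal{H}_0\subseteq\{1,\dots,m\}$. Assume $p$ is PRDS on $\mathcal{H}_0$ and that each null p-value $p_i$, $i\in\mathcal{H}_0$, is super-uniform (i.e. $\mathbb{P}[p_i\le t]\le t$ for all $t\in[0,1]$) and satisfies $p_i\ge p_{\min}$ almost surely for a constant $p_{\min}\in[0,1]$. Let $\alpha,\lambda\in(0,1)$ and let $\mathcal{R}$ be the rejection set of the Storey-BH procedure with parameters $\alpha,\lambda$ applied to $p$, and $A=\sum_{i=1}^m I(p_i\ge\lambda)$. Then \[\mathbb{E}\left[\frac{|\mathcal{R} \cap \mathcal{H}_0|}{\max\{1, |\mathcal{R}|\} } \right]\le \alpha(1 - \lambda)\sum_{i\in \mathcal{H}_0}\mathbb{E}\left[\frac{1}{1 + A}\mid p_i\le p_{*}\right],\qquad p_{*} = \max\left\{\frac{\alpha(1 - \lambda)}{m}, p_{\min}\right\}.\]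
   Context: Storey-BH procedure: given p-values $p_1,\dots,p_m$ with order statistics $p_{(1)}\le\dots\le p_{(m)}$, $\alpha\in(0,1)$ and $\lambda\in(0,1)$, let $A=\sum_{i=1}^m I(p_i\ge\lambda)$, $\hat\pi_0=\frac{1+A}{m(1-\lambda)}$, $R=\max\{r\in\{1,\dots,m\}: p_{(r)}\le \frac{\alpha r}{m\hat\pi_0},\ p_{(r)}<\lambda\}$ ($R=0$ if empty), and reject $\mathcal{R}=\{i: p_i\le \frac{\alpha R}{m\hat\pi_0},\ p_i<\lambda\}$. For vectors $a,b\in\mathbb{R}^m$, $a\succeq b$ means coordinatewise $a_j\ge b_j$; $A'\subset\mathbb{R}^m$ is increasing if $a\in A'$, $b\succeq a$ imply $b\in A'$. A random vector $Y$ is PRDS on $I_0$ if for every $i\in I_0$ and every increasing set $A'$, $y\mapsto\mathbb{P}[Y\in A'\mid Y_i=y]$ is non-decreasing. *)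

theory Defs
  imports "HOL-Probability.Probability" "HOL-Library.Multiset"
begin

text \<open>p-value vectors are functions from a finite index type 'm to the reals;
  the number of hypotheses is m = CARD('m).\<close>

definition order_stat :: "('m::finite \<Rightarrow> real) \<Rightarrow> nat \<Rightarrow> real" where
  "order_stat x r = sorted_list_of_multiset (image_mset x (mset_set UNIV)) ! (r - 1)"

definition storey_A :: "real \<Rightarrow> ('m::finite \<Rightarrow> real) \<Rightarrow> nat" where
  "storey_A lam x = card {i. x i \<ge> lam}"

definition storey_pi0 :: "real \<Rightarrow> ('m::finite \<Rightarrow> real) \<Rightarrow> real" where
  "storey_pi0 lam x = (1 + real (storey_A lam x)) / (real CARD('m) * (1 - lam))"

definition storey_R :: "real \<Rightarrow> real \<Rightarrow> ('m::finite \<Rightarrow> real) \<Rightarrow> nat" where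
  "storey_R alpha lam x =
     Max ({r \<in> {1..CARD('m)}.
            order_stat x r \<le> alpha * real r / (real CARD('m) * storey_pi0 lam x)
          \<and> order_stat x r < lam} \<union> {0})"

definition storey_rej :: "real \<Rightarrow> real \<Rightarrow> ('m::finite \<Rightarrow> real) \<Rightarrow> 'm set" where
  "storey_rej alpha lam x =
     {i. x i \<le> alpha * real (storey_R alpha lam x) / (real CARD('m) * storey_pi0 lam x)
        \<and> x i < lam}"

definition increasing_set :: "('m \<Rightarrow> real) set \<Rightarrow> bool" where
  "increasing_set S \<longleftrightarrow> (\<forall>a\<in>S. \<forall>b. (\<forall>j. a j \<le> b j) \<longrightarrow> b \<in> S)"

text \<open>PRDS on I0: for every i in I0 and every measurable increasing set S, the
  conditional probability P[Y \<in> S | Y_i = y] admits a version g (with values in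
  [0,1]) that is non-decreasing in y.  "g is a version" means
  P[Y \<in> S, Y_i \<in> B] = E[1{Y_i \<in> B} g(Y_i)] for all Borel B.\<close>
definition PRDS :: "'a measure \<Rightarrow> ('a \<Rightarrow> ('m::finite \<Rightarrow> real)) \<Rightarrow> 'm set \<Rightarrow> bool" where
  "PRDS M Y I0 \<longleftrightarrow>
    (\<forall>i\<in>I0. \<forall>S. S \<in> sets (Pi\<^sub>M UNIV (\<lambda>_. borel)) \<and> increasing_set S \<longrightarrow>
      (\<exists>g :: real \<Rightarrow> real. mono g \<and> g \<in> borel_measurable borel \<and> (\<forall>y. 0 \<le> g y \<and> g y \<le> 1) \<and>
         (\<forall>B \<in> sets borel.
            measure M {\<omega> \<in> space M. Y \<omega> \<in> S \<and> Y \<omega> i \<in> B}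
            = (\<integral>\<omega>. indicator {\<omega> \<in> space M. Y \<omega> i \<in> B} \<omega> * g (Y \<omega> i) \<partial>M))))"

definition cond_exp_event :: "'a measure \<Rightarrow> ('a \<Rightarrow> real) \<Rightarrow> 'a set \<Rightarrow> real" where
  "cond_exp_event M X E = (\<integral>\<omega>. indicator E \<omega> * X \<omega> \<partial>M) / measure M E"

end

theory Submission
  imports Defs
begin


lemma sorted_nth_P:
  fixes L :: "real list"
  assumes "sorted L" "r < length L" "\<And>a b. P b \<Longrightarrow> a \<le> b \<Longrightarrow> P a"
  shows "P (L ! r) \<longleftrightarrow> r < length (filter P L)"
  using assms
proof (induction L arbitrary: r)
  case Nil then show ?case by simp
next
  case (Cons a L)
  have allge: "\<forall>y\<in>set L. a \<le> y" using Cons.prems(1) by simp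
  show ?case
  proof (cases "P a")
    case True
    then show ?thesis using Cons by (cases r) auto
  next
    case False
    then have "\<forall>y\<in>set L. \<not> P y" using allge Cons.prems(3) by blast
    then have "filter P L = []" by (simp add: filter_empty_conv)
    moreover have "\<not> P ((a # L) ! r)"
    proof (cases r)
      case 0 then show ?thesis using False by simp
    next
      case (Suc r') then show ?thesis using Cons.prems(2) \<open>\<forall>y\<in>set L. \<not> P y\<close> by simp
    qed
    ultimately show ?thesis using False by simp
  qed
qed

lemma order_stat_P:
  fixes x :: "'m::finite \<Rightarrow> real"
  assumes "1 \<le> r" "r \<le> CARD('m)" "\<And>a b. P b \<Longrightarrow> a \<le> b \<Longrightarrow> P a"
  shows "P (order_stat x r) \<longleftrightarrow> r \<le> card {i. P (x i)}"
proof -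
  define L where "L = sorted_list_of_multiset (image_mset x (mset_set (UNIV::'m set)))"
  have mL: "mset L = image_mset x (mset_set UNIV)" unfolding L_def by simp
  have len: "length L = CARD('m)" using arg_cong[OF mL, of size] by simp
  have cnt: "length (filter P L) = card {i. P (x i)}"
  proof -
    have "length (filter P L) = size (filter_mset P (mset L))"
      by (metis mset_filter size_mset)
    also have "\<dots> = size (filter_mset P (image_mset x (mset_set UNIV)))" using mL by simp
    also have "\<dots> = size (image_mset x (filter_mset (\<lambda>i. P (x i)) (mset_set UNIV)))"
      by (simp add: filter_mset_image_mset)
    also have "\<dots> = card {i. P (x i)}"
      by (simp add: filter_mset_mset_set)
    finally show ?thesis .
  qed
  have "P (order_stat x r) \<longleftrightarrow> P (L ! (r-1))" unfolding order_stat_def L_def by simp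
  also have "\<dots> \<longleftrightarrow> r - 1 < length (filter P L)"
    by (rule sorted_nth_P) (use assms len L_def in auto)
  finally show ?thesis using cnt assms by auto
qed



definition thr :: "real \<Rightarrow> real \<Rightarrow> ('m::finite \<Rightarrow> real) \<Rightarrow> real" where
  "thr alpha lam x = alpha * real (storey_R alpha lam x) / (real CARD('m) * storey_pi0 lam x)"

definition Rset :: "real \<Rightarrow> real \<Rightarrow> ('m::finite \<Rightarrow> real) \<Rightarrow> nat set" where
  "Rset alpha lam x = {r \<in> {1..CARD('m)}.
            order_stat x r \<le> alpha * real r / (real CARD('m) * storey_pi0 lam x)
          \<and> order_stat x r < lam}"

lemma A_le: "storey_A lam (x::'m::finite \<Rightarrow> real) \<le> CARD('m)"
  unfolding storey_A_def by (simp add: card_mono)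

lemma mpi0: assumes "lam < 1"
  shows "real CARD('m) * storey_pi0 lam (x::'m::finite \<Rightarrow> real) = (1 + real (storey_A lam x)) / (1 - lam)"
  using assms unfolding storey_pi0_def by simp

lemma mpi0_pos: assumes "lam < 1"
  shows "real CARD('m) * storey_pi0 lam (x::'m::finite \<Rightarrow> real) > 0"
  using assms by (simp add: mpi0)

lemma R_eq: "storey_R alpha lam x = Max (Rset alpha lam x \<union> {0})"
  unfolding storey_R_def Rset_def by simp

lemma Rset_fin: "finite (Rset alpha lam x)" unfolding Rset_def by simp

lemma R_le: "storey_R alpha lam (x::'m::finite \<Rightarrow> real) \<le> CARD('m)"
  unfolding R_eq using Rset_fin[of alpha lam x] by (auto simp: Rset_def)

lemma R_ge: "r \<in> Rset alpha lam x \<Longrightarrow> r \<le> storey_R alpha lam x"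
  unfolding R_eq using Rset_fin[of alpha lam x] by simp

lemma R_in: "storey_R alpha lam x \<ge> 1 \<Longrightarrow> storey_R alpha lam x \<in> Rset alpha lam x"
proof -
  assume "storey_R alpha lam x \<ge> 1"
  moreover have "storey_R alpha lam x \<in> Rset alpha lam x \<union> {0}"
    unfolding R_eq using Rset_fin[of alpha lam x] by (intro Max_in) auto
  ultimately show ?thesis by auto
qed

lemma thr_eq: assumes "lam < 1"
  shows "thr alpha lam (x::'m::finite \<Rightarrow> real) = alpha * (1 - lam) * real (storey_R alpha lam x) / (1 + real (storey_A lam x))"
  unfolding thr_def mpi0[OF assms] using assms by (simp add: field_simps)

context
  fixes alpha lam :: real
  assumes al: "0 < alpha" "alpha < 1" "0 < lam" "lam < 1"
begin

lemma rej_R: assumes "i \<in> storey_rej alpha lam (x::'m::finite \<Rightarrow> real)"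
  shows "1 \<le> storey_R alpha lam x"
proof (rule ccontr)
  assume "\<not> 1 \<le> storey_R alpha lam x"
  then have R0: "storey_R alpha lam x = 0" by simp
  have xi: "x i \<le> 0" "x i < lam" using assms R0 unfolding storey_rej_def by auto
  have c1: "1 \<le> CARD('m)" by (simp add: Suc_leI)
  have "order_stat x 1 \<le> x i \<longleftrightarrow> 1 \<le> card {j. x j \<le> x i}"
    by (rule order_stat_P[where P="\<lambda>v. v \<le> x i"]) (use c1 in auto)
  moreover have "1 \<le> card {j. x j \<le> x i}"
  proof -
    have "i \<in> {j. x j \<le> x i}" by simp
    then have "card {j. x j \<le> x i} > 0" by (auto simp: card_gt_0_iff)
    then show ?thesis by simp
  qed
  ultimately have os: "order_stat x 1 \<le> x i" by simp
  have "0 < alpha * real 1 / (real CARD('m) * storey_pi0 lam x)"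
    using mpi0_pos[OF al(4), of x] al by simp
  then have "1 \<in> Rset alpha lam x" unfolding Rset_def using os xi c1 by auto
  then show False using R_ge R0 by fastforce
qed

lemma card_rej: assumes "1 \<le> storey_R alpha lam (x::'m::finite \<Rightarrow> real)"
  shows "storey_R alpha lam x \<le> card (storey_rej alpha lam x)"
proof -
  let ?R = "storey_R alpha lam x"
  have Rin: "?R \<in> Rset alpha lam x" using R_in assms by blast
  let ?o = "order_stat x ?R"
  have c: "?R \<le> CARD('m)" "?o \<le> thr alpha lam x" "?o < lam"
    using Rin unfolding Rset_def thr_def by auto
  have "?R \<le> card {j. x j \<le> ?o}"
    using order_stat_P[where P="\<lambda>v. v \<le> ?o" and r="?R" and x=x] assms c by auto
  also have "\<dots> \<le> card (storey_rej alpha lam x)"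
    by (rule card_mono) (use c in \<open>auto simp: storey_rej_def thr_def\<close>)
  finally show ?thesis .
qed

lemma os_mono: assumes "\<forall>j. x j \<le> y j" "1 \<le> r" "r \<le> CARD('m)"
  shows "order_stat (x::'m::finite \<Rightarrow> real) r \<le> order_stat y r"
proof -
  let ?v = "order_stat y r"
  have "r \<le> card {j. y j \<le> ?v}"
    using order_stat_P[where P="\<lambda>v. v \<le> ?v" and r=r and x=y] assms by auto
  also have "\<dots> \<le> card {j. x j \<le> ?v}"
    by (rule card_mono) (use assms(1) order_trans in auto)
  finally show ?thesis
    using order_stat_P[where P="\<lambda>v. v \<le> ?v" and r=r and x=x] assms by auto
qed

lemma A_mono: assumes "\<forall>j. x j \<le> y j"
  shows "storey_A lam (x::'m::finite \<Rightarrow> real) \<le> storey_A lam y"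
  unfolding storey_A_def by (rule card_mono) (use assms order_trans in auto)

lemma R_mono: assumes "\<forall>j. x j \<le> y j"
  shows "storey_R alpha lam (y::'m::finite \<Rightarrow> real) \<le> storey_R alpha lam x"
proof (cases "1 \<le> storey_R alpha lam y")
  case False then show ?thesis by simp
next
  case True
  let ?r = "storey_R alpha lam y"
  have Rin: "?r \<in> Rset alpha lam y" using R_in True by blast
  have r: "1 \<le> ?r" "?r \<le> CARD('m)" using Rin unfolding Rset_def by auto
  have o: "order_stat x ?r \<le> order_stat y ?r" by (rule os_mono) (use assms r in auto)
  have "alpha * real ?r / (real CARD('m) * storey_pi0 lam y) \<le> alpha * real ?r / (real CARD('m) * storey_pi0 lam x)"
  proof -
    have le: "(1 + real (storey_A lam x)) / (1 - lam) \<le> (1 + real (storey_A lam y)) / (1 - lam)"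
      using A_mono[OF assms] al by (intro divide_right_mono) auto
    have p: "0 < (1 + real (storey_A lam y)) / (1 - lam) * ((1 + real (storey_A lam x)) / (1 - lam))"
      using al by simp
    show ?thesis unfolding mpi0[OF al(4)] using divide_left_mono[OF le _ p, of "alpha * real ?r"] al by simp
  qed
  then have "?r \<in> Rset alpha lam x" using Rin o unfolding Rset_def by auto
  then show ?thesis by (rule R_ge)
qed

lemma thr_mono: assumes "\<forall>j. x j \<le> y j"
  shows "thr alpha lam (y::'m::finite \<Rightarrow> real) \<le> thr alpha lam x"
  unfolding thr_eq[OF al(4)]
  using R_mono[OF assms] A_mono[OF assms] al
  by (intro frac_le mult_left_mono) auto

lemma thr_lb: assumes "i \<in> storey_rej alpha lam (x::'m::finite \<Rightarrow> real)"
  shows "alpha * (1 - lam) / real CARD('m) \<le> thr alpha lam x" "x i \<le> thr alpha lam x"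
proof -
  have R1: "1 \<le> storey_R alpha lam x" by (rule rej_R[OF assms])
  have xi: "x i < lam" using assms unfolding storey_rej_def by auto
  have "{j. lam \<le> x j} \<subseteq> UNIV - {i}" using xi by auto
  then have "storey_A lam x \<le> CARD('m) - 1" unfolding storey_A_def
    using card_mono[OF _ \<open>{j. lam \<le> x j} \<subseteq> UNIV - {i}\<close>] by (simp add: card_Diff_singleton)
  then have Ale: "1 + real (storey_A lam x) \<le> real CARD('m)"
  proof -
    have "1 \<le> CARD('m)" by (simp add: Suc_leI)
    then have "1 + storey_A lam x \<le> CARD('m)" using \<open>storey_A lam x \<le> CARD('m) - 1\<close> by linarith
    then show ?thesis by (metis of_nat_1 of_nat_add of_nat_le_iff)
  qed
  have "alpha * (1 - lam) / real CARD('m) \<le> alpha * (1 - lam) * 1 / (1 + real (storey_A lam x))"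
    using divide_left_mono[OF Ale, of "alpha * (1 - lam)"] al by simp
  also have "\<dots> \<le> alpha * (1 - lam) * real (storey_R alpha lam x) / (1 + real (storey_A lam x))"
    using al R1 by (intro divide_right_mono mult_left_mono) auto
  finally show "alpha * (1 - lam) / real CARD('m) \<le> thr alpha lam x" unfolding thr_eq[OF al(4)] .
  show "x i \<le> thr alpha lam x" using assms unfolding storey_rej_def thr_def by auto
qed

end


abbreviation PM :: "('m::finite \<Rightarrow> real) measure" where
  "PM \<equiv> Pi\<^sub>M UNIV (\<lambda>_. borel)"

lemma space_PM: "space (PM :: ('m::finite \<Rightarrow> real) measure) = UNIV"
  by (simp add: space_PiM)

lemma card_sum: "real (card {i::'m::finite. P i}) = (\<Sum>i\<in>UNIV. if P i then 1 else 0)"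
  by (simp add: sum.If_cases)

lemma card_meas:
  fixes P :: "('m::finite \<Rightarrow> real) \<Rightarrow> 'm \<Rightarrow> bool"
  assumes "\<And>i. Measurable.pred PM (\<lambda>x::'m::finite \<Rightarrow> real. P x i)"
  shows "(\<lambda>x. real (card {i. P x i})) \<in> borel_measurable (PM :: ('m \<Rightarrow> real) measure)"
proof -
  have "(\<lambda>x. real (card {i. P x i})) = (\<lambda>x. \<Sum>i\<in>UNIV. if P x i then 1 else 0)"
    by (intro ext) (simp add: sum.If_cases Int_def)
  then show ?thesis using assms by simp
qed

lemma A_meas: "(\<lambda>x. real (storey_A lam x)) \<in> borel_measurable (PM :: ('m::finite \<Rightarrow> real) measure)"
  unfolding storey_A_def by (rule card_meas) measurable

lemma os_meas: assumes "1 \<le> r" "r \<le> CARD('m)"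
  shows "(\<lambda>x. order_stat x r) \<in> borel_measurable (PM :: ('m::finite \<Rightarrow> real) measure)"
proof (rule borel_measurable_iff_le[THEN iffD2], intro allI)
  fix a
  have "{w \<in> space PM. order_stat w r \<le> a} = {w \<in> space (PM :: ('m \<Rightarrow> real) measure). real r \<le> real (card {i. w i \<le> a})}"
    using order_stat_P[where P="\<lambda>v. v \<le> a" and r=r] assms by (auto simp: space_PM)
  also have "\<dots> \<in> sets PM"
    using card_meas[where P="\<lambda>w i. w i \<le> a"] by measurable
  finally show "{w \<in> space PM. order_stat w r \<le> a} \<in> sets (PM :: ('m \<Rightarrow> real) measure)" .
qed

lemma assumes "1 \<le> r" "r \<le> CARD('m)"
  shows "Measurable.pred (PM :: ('m::finite \<Rightarrow> real) measure) (\<lambda>x. order_stat x r < lam)"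
proof -
  note os_meas[OF assms, measurable]
  thm os_meas[OF assms]
  show ?thesis by measurable
qed

lemma pi0_meas: "(\<lambda>x. storey_pi0 lam x) \<in> borel_measurable (PM :: ('m::finite \<Rightarrow> real) measure)"
  unfolding storey_pi0_def using A_meas[measurable] by measurable

lemma R_meas: "(\<lambda>x. real (storey_R alpha lam x)) \<in> borel_measurable (PM :: ('m::finite \<Rightarrow> real) measure)"
proof -
  define f where "f r x = (if 1 \<le> r \<and> order_stat x r \<le> alpha * real r / (real CARD('m) * storey_pi0 lam x)
          \<and> order_stat x r < lam then real r else 0)" for r and x :: "'m \<Rightarrow> real"
  have eq: "real (storey_R alpha lam x) = Max ((\<lambda>r. f r x) ` {0..CARD('m)})" for x
  proof -
    have "Rset alpha lam x \<union> {0} = (\<lambda>r. if 1 \<le> r \<and> order_stat x r \<le> alpha * real r / (real CARD('m) * storey_pi0 lam x)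
          \<and> order_stat x r < lam then r else 0) ` {0..CARD('m)}"
      unfolding Rset_def by (auto simp: image_iff intro: bexI[of _ 0])
    then have "real (storey_R alpha lam x) = real (Max ((\<lambda>r. if 1 \<le> r \<and> order_stat x r \<le> alpha * real r / (real CARD('m) * storey_pi0 lam x)
          \<and> order_stat x r < lam then r else 0) ` {0..CARD('m)}))"
      unfolding R_eq by simp
    also have "\<dots> = Max (real ` ((\<lambda>r. if 1 \<le> r \<and> order_stat x r \<le> alpha * real r / (real CARD('m) * storey_pi0 lam x)
          \<and> order_stat x r < lam then r else 0) ` {0..CARD('m)}))"
      by (rule mono_Max_commute) (auto simp: mono_def)
    also have "\<dots> = Max ((\<lambda>r. f r x) ` {0..CARD('m)})"
      unfolding image_image f_def by (intro arg_cong[where f=Max] image_cong) auto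
    finally show ?thesis .
  qed
  have fm: "f r \<in> borel_measurable PM" if "r \<in> {0..CARD('m)}" for r
  proof (cases "r = 0")
    case True then show ?thesis unfolding f_def by simp
  next
    case False
    then have r: "1 \<le> r" "r \<le> CARD('m)" using that by auto
    have om: "(\<lambda>x::'m\<Rightarrow>real. order_stat x r) \<in> borel_measurable PM" by (rule os_meas[OF r])
    have g: "(\<lambda>x::'m\<Rightarrow>real. alpha * real r / (real CARD('m) * storey_pi0 lam x)) \<in> borel_measurable PM"
      using pi0_meas[where 'm='m and lam=lam] by simp
    have p1: "Measurable.pred PM (\<lambda>x::'m\<Rightarrow>real. order_stat x r \<le> alpha * real r / (real CARD('m) * storey_pi0 lam x))"
      using borel_measurable_le[OF om g] by (simp add: pred_def)
    have p2: "Measurable.pred PM (\<lambda>x::'m\<Rightarrow>real. order_stat x r < lam)"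
      using om by (simp add: pred_def borel_measurable_less)
    have "(\<lambda>x::'m\<Rightarrow>real. if order_stat x r \<le> alpha * real r / (real CARD('m) * storey_pi0 lam x)
          \<and> order_stat x r < lam then real r else 0) \<in> borel_measurable PM"
      using p1 p2 by (intro measurable_If) auto
    then show ?thesis unfolding f_def using r by simp
  qed
  show ?thesis unfolding eq by (rule borel_measurable_Max) (use fm in auto)
qed

lemma thr_meas: "(\<lambda>x. thr alpha lam x) \<in> borel_measurable (PM :: ('m::finite \<Rightarrow> real) measure)"
  unfolding thr_def using R_meas[measurable] pi0_meas[measurable] by measurable

lemma Y_meas: assumes "\<And>i. p i \<in> borel_measurable M"
  shows "(\<lambda>\<omega> i. p i \<omega>) \<in> M \<rightarrow>\<^sub>M (PM :: ('m::finite \<Rightarrow> real) measure)"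
  by (rule measurable_PiM_single') (use assms in auto)



definition decr :: "('m \<Rightarrow> real) set \<Rightarrow> bool" where
  "decr D \<longleftrightarrow> (\<forall>x\<in>D. \<forall>y. (\<forall>j. y j \<le> x j) \<longrightarrow> y \<in> D)"

context
  fixes M :: "'a measure" and p :: "'m::finite \<Rightarrow> 'a \<Rightarrow> real" and H0 :: "'m set" and i :: 'm
  assumes PS: "prob_space M"
    and meas: "\<And>j. p j \<in> borel_measurable M"
    and prds: "PRDS M (\<lambda>\<omega> j. p j \<omega>) H0"
    and iH: "i \<in> H0"
begin

interpretation prob_space M by (rule PS)

lemma Ymeas: "(\<lambda>\<omega> j. p j \<omega>) \<in> M \<rightarrow>\<^sub>M (PM :: ('m \<Rightarrow> real) measure)"
  by (rule Y_meas) (rule meas)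

lemma ev_sets: assumes "D \<in> sets (PM :: ('m \<Rightarrow> real) measure)"
  shows "{\<omega> \<in> space M. (\<lambda>j. p j \<omega>) \<in> D \<and> p i \<omega> \<le> t} \<in> sets M"
proof -
  have "{\<omega> \<in> space M. (\<lambda>j. p j \<omega>) \<in> D} \<in> sets M"
    using measurable_sets[OF Ymeas assms] by (simp add: vimage_def Int_def conj_commute)
  moreover have "{\<omega> \<in> space M. p i \<omega> \<le> t} \<in> sets M" using meas by measurable
  ultimately have "{\<omega> \<in> space M. (\<lambda>j. p j \<omega>) \<in> D} \<inter> {\<omega> \<in> space M. p i \<omega> \<le> t} \<in> sets M" by blast
  moreover have "{\<omega> \<in> space M. (\<lambda>j. p j \<omega>) \<in> D} \<inter> {\<omega> \<in> space M. p i \<omega> \<le> t} = {\<omega> \<in> space M. (\<lambda>j. p j \<omega>) \<in> D \<and> p i \<omega> \<le> t}"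
    by blast
  ultimately show ?thesis by simp
qed

lemma Et_sets: "{\<omega> \<in> space M. p i \<omega> \<le> t} \<in> sets M"
  using meas by measurable

lemma DEC:
  assumes D: "D \<in> sets (PM :: ('m \<Rightarrow> real) measure)" "decr D"
    and tt: "t \<le> t'" and Ft: "0 < measure M {\<omega> \<in> space M. p i \<omega> \<le> t}"
  shows "measure M {\<omega> \<in> space M. (\<lambda>j. p j \<omega>) \<in> D \<and> p i \<omega> \<le> t'} / measure M {\<omega> \<in> space M. p i \<omega> \<le> t'}
       \<le> measure M {\<omega> \<in> space M. (\<lambda>j. p j \<omega>) \<in> D \<and> p i \<omega> \<le> t} / measure M {\<omega> \<in> space M. p i \<omega> \<le> t}"
proof -
  define S where "S = UNIV - D"
  have Ssets: "S \<in> sets (PM :: ('m \<Rightarrow> real) measure)"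
    unfolding S_def using D(1) sets.compl_sets[OF D(1)] by (simp add: space_PM)
  have Sinc: "increasing_set S"
    unfolding increasing_set_def S_def using D(2) unfolding decr_def by blast
  obtain g :: "real \<Rightarrow> real" where g: "mono g" "g \<in> borel_measurable borel" "\<And>y. 0 \<le> g y \<and> g y \<le> 1"
    and gv: "\<And>B. B \<in> sets borel \<Longrightarrow> measure M {\<omega> \<in> space M. (\<lambda>j. p j \<omega>) \<in> S \<and> p i \<omega> \<in> B}
            = (\<integral>\<omega>. indicator {\<omega> \<in> space M. p i \<omega> \<in> B} \<omega> * g (p i \<omega>) \<partial>M)"
  proof -
    have "\<forall>S. S \<in> sets (PM :: ('m \<Rightarrow> real) measure) \<and> increasing_set S \<longrightarrow>
      (\<exists>g :: real \<Rightarrow> real. mono g \<and> g \<in> borel_measurable borel \<and> (\<forall>y. 0 \<le> g y \<and> g y \<le> 1) \<and>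
         (\<forall>B \<in> sets borel.
            measure M {\<omega> \<in> space M. (\<lambda>j. p j \<omega>) \<in> S \<and> p i \<omega> \<in> B}
            = (\<integral>\<omega>. indicator {\<omega> \<in> space M. p i \<omega> \<in> B} \<omega> * g (p i \<omega>) \<partial>M)))"
      using prds iH unfolding PRDS_def by (rule bspec)
    then have "\<exists>g :: real \<Rightarrow> real. mono g \<and> g \<in> borel_measurable borel \<and> (\<forall>y. 0 \<le> g y \<and> g y \<le> 1) \<and>
         (\<forall>B \<in> sets borel.
            measure M {\<omega> \<in> space M. (\<lambda>j. p j \<omega>) \<in> S \<and> p i \<omega> \<in> B}
            = (\<integral>\<omega>. indicator {\<omega> \<in> space M. p i \<omega> \<in> B} \<omega> * g (p i \<omega>) \<partial>M))"
      using Ssets Sinc by blast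
    then show ?thesis using that by blast
  qed
  define E where "E s = {\<omega> \<in> space M. p i \<omega> \<le> s}" for s
  define F where "F s = measure M (E s)" for s
  define G where "G s = (\<integral>\<omega>. indicator (E s) \<omega> * g (p i \<omega>) \<partial>M)" for s
  define P where "P s = measure M {\<omega> \<in> space M. (\<lambda>j. p j \<omega>) \<in> D \<and> p i \<omega> \<le> s}" for s
  have Es: "E s \<in> sets M" for s unfolding E_def by (rule Et_sets)
  have gm: "(\<lambda>\<omega>. g (p i \<omega>)) \<in> borel_measurable M" using g(2) meas by measurable
  have intg: "integrable M (\<lambda>\<omega>. indicator (E s) \<omega> * g (p i \<omega>))" for s
    by (rule integrable_const_bound[where B=1]) (use g(3) gm Es in \<open>auto simp: indicator_def\<close>)
  have intI: "integrable M (\<lambda>\<omega>. c * indicator (E s) \<omega> :: real)" for c s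
    using Es[of s] by (intro integrable_mult_right integrable_real_indicator) (auto simp: emeasure_eq_measure)
  have intI1: "integrable M (\<lambda>\<omega>. indicator (E s) \<omega> :: real)" for s
    using intI[of 1 s] by simp
  have PG: "P s = F s - G s" for s
  proof -
    have GS: "G s = measure M {\<omega> \<in> space M. (\<lambda>j. p j \<omega>) \<in> S \<and> p i \<omega> \<le> s}"
      using gv[of "{..s}"] unfolding G_def E_def by simp
    have A1: "{\<omega> \<in> space M. (\<lambda>j. p j \<omega>) \<in> S \<and> p i \<omega> \<le> s} \<in> sets M"
      by (rule ev_sets[OF Ssets])
    have A2: "{\<omega> \<in> space M. (\<lambda>j. p j \<omega>) \<in> D \<and> p i \<omega> \<le> s} \<in> sets M"
      by (rule ev_sets[OF D(1)])
    have un: "E s = {\<omega> \<in> space M. (\<lambda>j. p j \<omega>) \<in> S \<and> p i \<omega> \<le> s} \<union> {\<omega> \<in> space M. (\<lambda>j. p j \<omega>) \<in> D \<and> p i \<omega> \<le> s}"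
      unfolding E_def S_def by auto
    have "F s = measure M {\<omega> \<in> space M. (\<lambda>j. p j \<omega>) \<in> S \<and> p i \<omega> \<le> s} + P s"
      unfolding F_def P_def un by (rule finite_measure_Union) (use A1 A2 S_def in auto)
    then show ?thesis using GS by simp
  qed
  have G_le: "G t \<le> g t * F t"
  proof -
    have "G t \<le> (\<integral>\<omega>. g t * indicator (E t) \<omega> \<partial>M)"
      unfolding G_def
      by (rule integral_mono) (use intg intI Es g(1) in \<open>auto simp: indicator_def E_def mono_def\<close>)
    also have "\<dots> = g t * F t" unfolding F_def using Es by simp
    finally show ?thesis .
  qed
  have G_ge: "G t + g t * (F t' - F t) \<le> G t'"
  proof -
    have intB: "integrable M (\<lambda>\<omega>. indicator (E t) \<omega> * g (p i \<omega>) + g t * (indicator (E t') \<omega> - indicator (E t) \<omega>))"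
      using intg intI1 by (intro Bochner_Integration.integrable_add Bochner_Integration.integrable_mult_right Bochner_Integration.integrable_diff) auto
    have "(\<integral>\<omega>. indicator (E t) \<omega> * g (p i \<omega>) + g t * (indicator (E t') \<omega> - indicator (E t) \<omega>) \<partial>M) \<le> G t'"
      unfolding G_def
      by (rule integral_mono) (use intg Es g(1) tt intB in \<open>auto simp: indicator_def E_def mono_def\<close>)
    moreover have "(\<integral>\<omega>. indicator (E t) \<omega> * g (p i \<omega>) + g t * (indicator (E t') \<omega> - indicator (E t) \<omega>) \<partial>M)
        = G t + g t * (F t' - F t)"
    proof -
      have iE: "(\<integral>\<omega>. indicator (E s) \<omega> \<partial>M) = F s" for s
        unfolding F_def using Es[of s] by (simp add: emeasure_eq_measure)
      have "(\<integral>\<omega>. indicator (E t) \<omega> * g (p i \<omega>) + g t * (indicator (E t') \<omega> - indicator (E t) \<omega>) \<partial>M)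
         = G t + (\<integral>\<omega>. g t * (indicator (E t') \<omega> - indicator (E t) \<omega>) \<partial>M)"
        unfolding G_def by (rule Bochner_Integration.integral_add) (use intg intI1 in auto)
      also have "(\<integral>\<omega>. g t * (indicator (E t') \<omega> - indicator (E t) \<omega>) \<partial>M)
          = g t * (\<integral>\<omega>. (indicator (E t') \<omega> - indicator (E t) \<omega>) \<partial>M)" by simp
      also have "(\<integral>\<omega>. (indicator (E t') \<omega> - indicator (E t) \<omega>) \<partial>M) = F t' - F t"
        using Bochner_Integration.integral_diff[OF intI1 intI1, of t' t] iE by simp
      finally show ?thesis .
    qed
    ultimately show ?thesis by simp
  qed
  have Fmono: "F t \<le> F t'" unfolding F_def E_def
    by (rule finite_measure_mono) (use tt Et_sets in auto)
  have key: "G t * F t' \<le> F t * G t'"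
  proof -
    have G0: "0 \<le> G t" unfolding G_def by (rule Bochner_Integration.integral_nonneg) (use g(3) in \<open>auto simp: indicator_def\<close>)
    have "G t * F t' = G t * F t + G t * (F t' - F t)" by (simp add: algebra_simps)
    also have "\<dots> \<le> G t * F t + g t * F t * (F t' - F t)"
      using G_le Fmono by (intro add_left_mono mult_right_mono) auto
    also have "\<dots> \<le> G t * F t + F t * (G t' - G t)"
    proof -
      have "g t * (F t' - F t) \<le> G t' - G t" using G_ge by simp
      then have "F t * (g t * (F t' - F t)) \<le> F t * (G t' - G t)"
        using Ft unfolding F_def E_def by (intro mult_left_mono) auto
      then show ?thesis by (simp add: algebra_simps)
    qed
    finally show ?thesis by (simp add: algebra_simps)
  qed
  have Ft0: "0 < F t" using Ft unfolding F_def E_def .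
  have Ft'0: "0 < F t'" using Ft0 Fmono by simp
  have "P t' / F t' = 1 - G t' / F t'" using PG Ft'0 by (simp add: field_simps)
  also have "\<dots> \<le> 1 - G t / F t" using key Ft0 Ft'0 by (simp add: field_simps)
  also have "\<dots> = P t / F t" using PG Ft0 by (simp add: field_simps)
  finally show ?thesis unfolding P_def F_def E_def .
qed

end


definition Wf :: "real \<Rightarrow> ('m::finite \<Rightarrow> real) \<Rightarrow> real" where
  "Wf lam x = 1 / (1 + real (storey_A lam x))"

lemma telesc: "k \<le> n \<Longrightarrow> (\<Sum>l\<in>{0..n}. (1 / (real l + 1) - 1 / (real l + 2)) * (if k \<le> l then 1 else 0))
   = 1 / (real k + 1) - 1 / (real n + 2)"
proof (induction n)
  case 0 then show ?case by simp
next
  case (Suc n)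
  show ?case
  proof (cases "k \<le> n")
    case True
    then show ?thesis using Suc by (simp add: sum.atLeast0_atMost_Suc)
  next
    case False
    then have k: "k = Suc n" using Suc by simp
    have "(\<Sum>l\<in>{0..n}. (1 / (real l + 1) - 1 / (real l + 2)) * (if k \<le> l then 1 else 0)) = 0"
      using k by (intro sum.neutral) auto
    then show ?thesis using k by (simp add: sum.atLeast0_atMost_Suc)
  qed
qed

context
  fixes M :: "'a measure" and p :: "'m::finite \<Rightarrow> 'a \<Rightarrow> real" and H0 :: "'m set" and i :: 'm
    and alpha lam :: real
  assumes PS: "prob_space M"
    and meas: "\<And>j. p j \<in> borel_measurable M"
    and prds: "PRDS M (\<lambda>\<omega> j. p j \<omega>) H0"
    and iH: "i \<in> H0"
    and al: "0 < alpha" "alpha < 1" "0 < lam" "lam < 1"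
begin

interpretation prob_space M by (rule PS)

lemma MONsum:
  assumes L: "finite L" "\<forall>l\<in>L. 0 \<le> c l" "\<forall>l\<in>L. D l \<in> sets (PM :: ('m \<Rightarrow> real) measure) \<and> decr (D l)"
    and tt: "t \<le> t'" and Ft: "0 < measure M {\<omega> \<in> space M. p i \<omega> \<le> t}"
    and f: "\<forall>\<omega>\<in>space M. f \<omega> = (\<Sum>l\<in>L. c l * indicator (D l) (\<lambda>j. p j \<omega>))"
  shows "(\<integral>\<omega>. indicator {\<omega> \<in> space M. p i \<omega> \<le> t'} \<omega> * f \<omega> \<partial>M) / measure M {\<omega> \<in> space M. p i \<omega> \<le> t'}
       \<le> (\<integral>\<omega>. indicator {\<omega> \<in> space M. p i \<omega> \<le> t} \<omega> * f \<omega> \<partial>M) / measure M {\<omega> \<in> space M. p i \<omega> \<le> t}"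
proof -
  define P where "P l s = measure M {\<omega> \<in> space M. (\<lambda>j. p j \<omega>) \<in> D l \<and> p i \<omega> \<le> s}" for l s
  define F where "F s = measure M {\<omega> \<in> space M. p i \<omega> \<le> s}" for s
  have eq: "(\<integral>\<omega>. indicator {\<omega> \<in> space M. p i \<omega> \<le> s} \<omega> * f \<omega> \<partial>M) = (\<Sum>l\<in>L. c l * P l s)" for s
  proof -
    have sets: "{\<omega> \<in> space M. (\<lambda>j. p j \<omega>) \<in> D l \<and> p i \<omega> \<le> s} \<in> sets M" if "l \<in> L" for l
      using ev_sets[OF PS meas prds iH] L(3) that by blast
    have "(\<integral>\<omega>. indicator {\<omega> \<in> space M. p i \<omega> \<le> s} \<omega> * f \<omega> \<partial>M)
        = (\<integral>\<omega>. (\<Sum>l\<in>L. c l * indicator {\<omega> \<in> space M. (\<lambda>j. p j \<omega>) \<in> D l \<and> p i \<omega> \<le> s} \<omega>) \<partial>M)"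
      by (rule Bochner_Integration.integral_cong) (auto simp: f indicator_def sum_distrib_left)
    also have "\<dots> = (\<Sum>l\<in>L. (\<integral>\<omega>. c l * indicator {\<omega> \<in> space M. (\<lambda>j. p j \<omega>) \<in> D l \<and> p i \<omega> \<le> s} \<omega> \<partial>M))"
      by (rule Bochner_Integration.integral_sum)
        (use sets in \<open>auto intro!: Bochner_Integration.integrable_mult_right integrable_real_indicator simp: emeasure_eq_measure\<close>)
    also have "\<dots> = (\<Sum>l\<in>L. c l * P l s)"
      unfolding P_def by (intro sum.cong refl) (use sets in \<open>simp add: emeasure_eq_measure\<close>)
    finally show ?thesis .
  qed
  have "(\<Sum>l\<in>L. c l * P l t') / F t' = (\<Sum>l\<in>L. c l * (P l t' / F t'))"
    by (simp add: sum_divide_distrib)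
  also have "\<dots> \<le> (\<Sum>l\<in>L. c l * (P l t / F t))"
  proof (rule sum_mono)
    fix l assume l: "l \<in> L"
    have "P l t' / F t' \<le> P l t / F t"
      unfolding P_def F_def using DEC[OF PS meas prds iH _ _ tt Ft] L(3) l by blast
    then show "c l * (P l t' / F t') \<le> c l * (P l t / F t)" using L(2) l by (intro mult_left_mono) auto
  qed
  also have "\<dots> = (\<Sum>l\<in>L. c l * P l t) / F t"
    by (simp add: sum_divide_distrib)
  finally show ?thesis unfolding eq F_def .
qed

lemma Wdecomp:
  fixes x :: "'m \<Rightarrow> real"
  shows "Wf lam x * (if u \<le> thr alpha lam x then 1 else 0)
    = (\<Sum>l\<in>{0..CARD('m)+1}. (if l \<le> CARD('m) then 1 / (real l + 1) - 1 / (real l + 2) else 1 / (real CARD('m) + 2))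
        * indicator (if l \<le> CARD('m) then {x. storey_A lam x \<le> l \<and> u \<le> thr alpha lam x} else {x. u \<le> thr alpha lam x}) x)"
    (is "?L = ?R")
proof (cases "u \<le> thr alpha lam x")
  case False
  then show ?thesis by (auto simp: indicator_def intro!: sum.neutral)
next
  case True
  let ?m = "CARD('m)"
  let ?A = "storey_A lam x"
  have "?R = (\<Sum>l\<in>{0..Suc ?m}. (if l \<le> ?m then 1 / (real l + 1) - 1 / (real l + 2) else 1 / (real ?m + 2))
        * indicator (if l \<le> ?m then {x. storey_A lam x \<le> l \<and> u \<le> thr alpha lam x} else {x. u \<le> thr alpha lam x}) x)"
    by simp
  also have "\<dots> = (\<Sum>l\<in>{0..?m}. (if l \<le> ?m then 1 / (real l + 1) - 1 / (real l + 2) else 1 / (real ?m + 2))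
        * indicator (if l \<le> ?m then {x. storey_A lam x \<le> l \<and> u \<le> thr alpha lam x} else {x. u \<le> thr alpha lam x}) x)
        + 1 / (real ?m + 2)"
    using True by (simp add: sum.atLeast0_atMost_Suc indicator_def)
  also have "(\<Sum>l\<in>{0..?m}. (if l \<le> ?m then 1 / (real l + 1) - 1 / (real l + 2) else 1 / (real ?m + 2))
        * indicator (if l \<le> ?m then {x. storey_A lam x \<le> l \<and> u \<le> thr alpha lam x} else {x. u \<le> thr alpha lam x}) x)
      = (\<Sum>l\<in>{0..?m}. (1 / (real l + 1) - 1 / (real l + 2)) * (if ?A \<le> l then 1 else 0))"
    using True by (intro sum.cong refl) (simp add: indicator_def)
  also have "\<dots> = 1 / (real ?A + 1) - 1 / (real ?m + 2)"
    by (rule telesc[OF A_le])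
  finally show ?thesis using True unfolding Wf_def by (simp add: add.commute)
qed

lemma W_meas: "(\<lambda>x. Wf lam x) \<in> borel_measurable (PM :: ('m \<Rightarrow> real) measure)"
  unfolding Wf_def using A_meas[where lam=lam] by measurable

lemma WY_meas[measurable]: "(\<lambda>\<omega>. Wf lam (\<lambda>j. p j \<omega>)) \<in> borel_measurable M"
  using measurable_compose[OF Ymeas[OF PS meas prds iH] W_meas] by simp

lemma TY_meas[measurable]: "(\<lambda>\<omega>. thr alpha lam (\<lambda>j. p j \<omega>)) \<in> borel_measurable M"
  using measurable_compose[OF Ymeas[OF PS meas prds iH] thr_meas] by simp

lemma W_bounds: "0 \<le> Wf lam x" "Wf lam x \<le> 1"
  unfolding Wf_def by auto

lemma W_abs: "\<bar>Wf lam x\<bar> \<le> 1"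
  using W_bounds[of x] by simp

lemma pi_meas[measurable]: "p j \<in> borel_measurable M" by (rule meas)

lemma int_Gf: "integrable M (\<lambda>\<omega>. indicator {\<omega> \<in> space M. p i \<omega> \<le> s} \<omega> * (Wf lam (\<lambda>j. p j \<omega>) * (if u \<le> thr alpha lam (\<lambda>j. p j \<omega>) then 1 else 0)))"
proof (rule integrable_const_bound[where B=1])
  show "AE x in M. norm (indicator {\<omega> \<in> space M. p i \<omega> \<le> s} x * (Wf lam (\<lambda>j. p j x) * (if u \<le> thr alpha lam (\<lambda>j. p j x) then 1 else 0))) \<le> 1"
    by (intro AE_I2) (auto simp: indicator_def W_abs)
  show "(\<lambda>\<omega>. indicator {\<omega> \<in> space M. p i \<omega> \<le> s} \<omega> * (Wf lam (\<lambda>j. p j \<omega>) * (if u \<le> thr alpha lam (\<lambda>j. p j \<omega>) then 1 else 0))) \<in> borel_measurable M"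
    by measurable
qed

lemma int_Z: "integrable M (\<lambda>\<omega>. indicator {\<omega> \<in> space M. p i \<omega> \<le> s} \<omega> * (Wf lam (\<lambda>j. p j \<omega>) * (if thr alpha lam (\<lambda>j. p j \<omega>) = v then 1 else 0)))"
proof (rule integrable_const_bound[where B=1])
  show "AE x in M. norm (indicator {\<omega> \<in> space M. p i \<omega> \<le> s} x * (Wf lam (\<lambda>j. p j x) * (if thr alpha lam (\<lambda>j. p j x) = v then 1 else 0))) \<le> 1"
    by (intro AE_I2) (auto simp: indicator_def W_abs)
  show "(\<lambda>\<omega>. indicator {\<omega> \<in> space M. p i \<omega> \<le> s} \<omega> * (Wf lam (\<lambda>j. p j \<omega>) * (if thr alpha lam (\<lambda>j. p j \<omega>) = v then 1 else 0))) \<in> borel_measurable M"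
    by measurable
qed

lemma setD: "(if l \<le> CARD('m) then {x. storey_A lam x \<le> l \<and> u \<le> thr alpha lam x} else {x. u \<le> thr alpha lam x})
   \<in> sets (PM :: ('m \<Rightarrow> real) measure)
  \<and> decr (if l \<le> CARD('m) then {x::'m \<Rightarrow> real. storey_A lam x \<le> l \<and> u \<le> thr alpha lam x} else {x. u \<le> thr alpha lam x})"
proof -
  have 1: "{x \<in> space PM. real (storey_A lam x) \<le> real l} \<in> sets (PM :: ('m \<Rightarrow> real) measure)"
    by (rule borel_measurable_le[OF A_meas]) simp
  have 2: "{x \<in> space PM. u \<le> thr alpha lam x} \<in> sets (PM :: ('m \<Rightarrow> real) measure)"
    by (rule borel_measurable_le[OF _ thr_meas]) simp
  have s1: "{x::'m \<Rightarrow> real. storey_A lam x \<le> l \<and> u \<le> thr alpha lam x} \<in> sets PM"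
  proof -
    have "{x::'m \<Rightarrow> real. storey_A lam x \<le> l \<and> u \<le> thr alpha lam x}
       = {x \<in> space PM. real (storey_A lam x) \<le> real l} \<inter> {x \<in> space PM. u \<le> thr alpha lam x}"
      by (auto simp: space_PM)
    then show ?thesis using sets.Int[OF 1 2] by simp
  qed
  have s2: "{x::'m \<Rightarrow> real. u \<le> thr alpha lam x} \<in> sets PM"
    using 2 by (simp add: space_PM)
  have d1: "decr {x::'m \<Rightarrow> real. storey_A lam x \<le> l \<and> u \<le> thr alpha lam x}"
    unfolding decr_def
  proof (intro ballI allI impI)
    fix x y :: "'m \<Rightarrow> real" assume x: "x \<in> {x. storey_A lam x \<le> l \<and> u \<le> thr alpha lam x}" and y: "\<forall>j. y j \<le> x j"
    have "storey_A lam y \<le> storey_A lam x" by (rule A_mono[OF al y])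
    moreover have "thr alpha lam x \<le> thr alpha lam y" by (rule thr_mono[OF al y])
    ultimately show "y \<in> {x. storey_A lam x \<le> l \<and> u \<le> thr alpha lam x}" using x by auto
  qed
  have d2: "decr {x::'m \<Rightarrow> real. u \<le> thr alpha lam x}"
    unfolding decr_def
  proof (intro ballI allI impI)
    fix x y :: "'m \<Rightarrow> real" assume x: "x \<in> {x. u \<le> thr alpha lam x}" and y: "\<forall>j. y j \<le> x j"
    have "thr alpha lam x \<le> thr alpha lam y" by (rule thr_mono[OF al y])
    then show "y \<in> {x. u \<le> thr alpha lam x}" using x by auto
  qed
  show ?thesis using s1 s2 d1 d2 by auto
qed

lemma MON:
  assumes tt: "t \<le> t'" and Ft: "0 < measure M {\<omega> \<in> space M. p i \<omega> \<le> t}"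
  shows "(\<integral>\<omega>. indicator {\<omega> \<in> space M. p i \<omega> \<le> t'} \<omega> * (Wf lam (\<lambda>j. p j \<omega>) * (if u \<le> thr alpha lam (\<lambda>j. p j \<omega>) then 1 else 0)) \<partial>M)
          / measure M {\<omega> \<in> space M. p i \<omega> \<le> t'}
       \<le> (\<integral>\<omega>. indicator {\<omega> \<in> space M. p i \<omega> \<le> t} \<omega> * (Wf lam (\<lambda>j. p j \<omega>) * (if u \<le> thr alpha lam (\<lambda>j. p j \<omega>) then 1 else 0)) \<partial>M)
          / measure M {\<omega> \<in> space M. p i \<omega> \<le> t}"
proof (rule MONsum[where L="{0..CARD('m)+1}"
      and c="\<lambda>l. if l \<le> CARD('m) then 1 / (real l + 1) - 1 / (real l + 2) else 1 / (real CARD('m) + 2)"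
      and D="\<lambda>l. if l \<le> CARD('m) then {x::'m\<Rightarrow>real. storey_A lam x \<le> l \<and> u \<le> thr alpha lam x} else {x::'m\<Rightarrow>real. u \<le> thr alpha lam x}",
      OF _ _ _ tt Ft])
  show "finite {0..CARD('m)+1}" by simp
  show "\<forall>l\<in>{0..CARD('m) + 1}. 0 \<le> (if l \<le> CARD('m) then 1 / (real l + 1) - 1 / (real l + 2) else 1 / (real CARD('m) + 2))"
  proof
    fix l :: nat
    have "1 / (real l + 2) \<le> 1 / (real l + 1)" by (rule divide_left_mono) auto
    then show "0 \<le> (if l \<le> CARD('m) then 1 / (real l + 1) - 1 / (real l + 2) else 1 / (real CARD('m) + 2))"
      by simp
  qed
  show "\<forall>l\<in>{0..CARD('m) + 1}. (if l \<le> CARD('m) then {x::'m\<Rightarrow>real. storey_A lam x \<le> l \<and> u \<le> thr alpha lam x} else {x::'m\<Rightarrow>real. u \<le> thr alpha lam x}) \<in> sets PM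
     \<and> decr (if l \<le> CARD('m) then {x::'m\<Rightarrow>real. storey_A lam x \<le> l \<and> u \<le> thr alpha lam x} else {x::'m\<Rightarrow>real. u \<le> thr alpha lam x})"
  proof
    fix l assume "l \<in> {0..CARD('m) + 1}"
    show "(if l \<le> CARD('m) then {x::'m\<Rightarrow>real. storey_A lam x \<le> l \<and> u \<le> thr alpha lam x} else {x::'m\<Rightarrow>real. u \<le> thr alpha lam x}) \<in> sets PM
     \<and> decr (if l \<le> CARD('m) then {x::'m\<Rightarrow>real. storey_A lam x \<le> l \<and> u \<le> thr alpha lam x} else {x::'m\<Rightarrow>real. u \<le> thr alpha lam x})"
      using setD[of l u] by assumption
  qed
  show "\<forall>\<omega>\<in>space M. Wf lam (\<lambda>j. p j \<omega>) * (if u \<le> thr alpha lam (\<lambda>j. p j \<omega>) then 1 else 0) =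
       (\<Sum>l\<in>{0..CARD('m) + 1}. (if l \<le> CARD('m) then 1 / (real l + 1) - 1 / (real l + 2) else 1 / (real CARD('m) + 2)) *
         indicator (if l \<le> CARD('m) then {x::'m\<Rightarrow>real. storey_A lam x \<le> l \<and> u \<le> thr alpha lam x} else {x::'m\<Rightarrow>real. u \<le> thr alpha lam x}) (\<lambda>j. p j \<omega>))"
    using Wdecomp by blast
qed

definition Ff :: "real \<Rightarrow> real" where
  "Ff s = measure M {\<omega> \<in> space M. p i \<omega> \<le> s}"

definition Gf :: "real \<Rightarrow> real \<Rightarrow> real" where
  "Gf u s = (\<integral>\<omega>. indicator {\<omega> \<in> space M. p i \<omega> \<le> s} \<omega> * (Wf lam (\<lambda>j. p j \<omega>) * (if u \<le> thr alpha lam (\<lambda>j. p j \<omega>) then 1 else 0)) \<partial>M)"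

definition Zf :: "real \<Rightarrow> real" where
  "Zf v = (\<integral>\<omega>. indicator {\<omega> \<in> space M. p i \<omega> \<le> v} \<omega> * (Wf lam (\<lambda>j. p j \<omega>) * (if thr alpha lam (\<lambda>j. p j \<omega>) = v then 1 else 0)) \<partial>M)"

lemma IND:
  assumes su: "\<And>t. 0 \<le> t \<Longrightarrow> t \<le> 1 \<Longrightarrow> Ff t \<le> t"
    and fin: "finite V"
  shows "V \<noteq> {} \<longrightarrow> (\<forall>v\<in>V. 0 < v \<and> 0 < Ff v) \<longrightarrow> (\<Sum>v\<in>V. Zf v / v) \<le> Gf (Min V) (Min V) / Ff (Min V)"
  using fin
proof (induction V rule: finite_linorder_min_induct)
  case empty then show ?case by simp
next
  case (insert b V')
  show ?case
  proof (intro impI)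
    assume pos: "\<forall>v\<in>insert b V'. 0 < v \<and> 0 < Ff v"
    have b0: "0 < b" "0 < Ff b" using pos by auto
    have Fble: "Ff b \<le> b"
    proof (cases "b \<le> 1")
      case True then show ?thesis using su b0 by simp
    next
      case False
      have "Ff b \<le> 1" unfolding Ff_def by (rule prob_le_1)
      then show ?thesis using False by simp
    qed
    have Z0: "0 \<le> Zf b" unfolding Zf_def
      by (rule Bochner_Integration.integral_nonneg) (auto simp: indicator_def W_bounds)
    have Zb1: "Zf b / b \<le> Zf b / Ff b"
      by (rule divide_left_mono[OF Fble Z0]) (use b0 in simp)
    have bnot: "b \<notin> V'" using insert.hyps by auto
    have ZG: "Zf b \<le> Gf b b"
      unfolding Zf_def Gf_def
      by (rule integral_mono[OF int_Z int_Gf]) (auto simp: indicator_def W_bounds)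
    show "(\<Sum>v\<in>insert b V'. Zf v / v) \<le> Gf (Min (insert b V')) (Min (insert b V')) / Ff (Min (insert b V'))"
    proof (cases "V' = {}")
      case True
      have "Zf b / Ff b \<le> Gf b b / Ff b" using ZG b0 by (intro divide_right_mono) auto
      then show ?thesis using True Zb1 by simp
    next
      case False
      define v2 where "v2 = Min V'"
      have v2in: "v2 \<in> V'" unfolding v2_def using False insert.hyps by auto
      have bv2: "b < v2" using v2in insert.hyps by auto
      have Minb: "Min (insert b V') = b"
        using False insert.hyps v2in bv2 by (simp add: Min_insert v2_def[symmetric])
      have IH: "(\<Sum>v\<in>V'. Zf v / v) \<le> Gf v2 v2 / Ff v2"
        using insert.IH False pos unfolding v2_def by auto
      have mon: "Gf v2 v2 / Ff v2 \<le> Gf v2 b / Ff b"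
        unfolding Gf_def Ff_def by (rule MON) (use bv2 b0 Ff_def in auto)
      have ZG2: "Zf b \<le> Gf b b - Gf v2 b"
      proof -
        have "Zf b \<le> (\<integral>\<omega>. indicator {\<omega> \<in> space M. p i \<omega> \<le> b} \<omega> * (Wf lam (\<lambda>j. p j \<omega>) * (if b \<le> thr alpha lam (\<lambda>j. p j \<omega>) then 1 else 0))
              - indicator {\<omega> \<in> space M. p i \<omega> \<le> b} \<omega> * (Wf lam (\<lambda>j. p j \<omega>) * (if v2 \<le> thr alpha lam (\<lambda>j. p j \<omega>) then 1 else 0)) \<partial>M)"
          unfolding Zf_def
          by (rule integral_mono[OF int_Z Bochner_Integration.integrable_diff[OF int_Gf int_Gf]])
            (use bv2 in \<open>auto simp: indicator_def W_bounds\<close>)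
        also have "\<dots> = Gf b b - Gf v2 b"
          unfolding Gf_def by (rule Bochner_Integration.integral_diff[OF int_Gf int_Gf])
        finally show ?thesis .
      qed
      have "(\<Sum>v\<in>insert b V'. Zf v / v) = Zf b / b + (\<Sum>v\<in>V'. Zf v / v)"
        using insert.hyps bnot by simp
      also have "\<dots> \<le> Zf b / Ff b + Gf v2 b / Ff b" using Zb1 IH mon by simp
      also have "\<dots> \<le> (Gf b b - Gf v2 b) / Ff b + Gf v2 b / Ff b"
        using ZG2 b0 by (simp add: divide_right_mono)
      also have "\<dots> = Gf b b / Ff b" by (simp add: diff_divide_distrib)
      finally show ?thesis using Minb by simp
    qed
  qed
qed

definition Vs :: "real \<Rightarrow> real set" where
  "Vs ps = {v \<in> (\<lambda>(k, a). alpha * (1 - lam) * real k / (1 + real a)) ` ({0..CARD('m)} \<times> {0..CARD('m)}). ps \<le> v}"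

definition Bf :: "real \<Rightarrow> 'a \<Rightarrow> real" where
  "Bf ps \<omega> = (\<Sum>v\<in>Vs ps. indicator {\<omega> \<in> space M. p i \<omega> \<le> v} \<omega> * (Wf lam (\<lambda>j. p j \<omega>) * (if thr alpha lam (\<lambda>j. p j \<omega>) = v then 1 else 0)) / v)"

lemma Vs_fin: "finite (Vs ps)" unfolding Vs_def by simp

lemma thr_in_V0: "thr alpha lam (x::'m \<Rightarrow> real) \<in> (\<lambda>(k, a). alpha * (1 - lam) * real k / (1 + real a)) ` ({0..CARD('m)} \<times> {0..CARD('m)})"
proof -
  have "(storey_R alpha lam x, storey_A lam x) \<in> {0..CARD('m)} \<times> {0..CARD('m)}"
    using R_le A_le by auto
  then show ?thesis unfolding thr_eq[OF al(4)] by (rule rev_image_eqI) simp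
qed

lemma PERi:
  fixes pmin :: real
  defines "ps \<equiv> max (alpha * (1 - lam) / real CARD('m)) pmin"
  assumes su: "\<And>t. 0 \<le> t \<Longrightarrow> t \<le> 1 \<Longrightarrow> Ff t \<le> t"
    and pmin_ae: "AE \<omega> in M. pmin \<le> p i \<omega>"
    and cpos: "0 < Ff ps"
  shows "integrable M (Bf ps)"
    "AE \<omega> in M. (if i \<in> storey_rej alpha lam (\<lambda>j. p j \<omega>) then Wf lam (\<lambda>j. p j \<omega>) / thr alpha lam (\<lambda>j. p j \<omega>) else 0) \<le> Bf ps \<omega>"
    "(\<integral>\<omega>. Bf ps \<omega> \<partial>M) \<le> cond_exp_event M (\<lambda>\<omega>. 1 / (1 + real (storey_A lam (\<lambda>j. p j \<omega>)))) {\<omega> \<in> space M. p i \<omega> \<le> ps}"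
proof -
  have ps0: "0 < ps" unfolding ps_def using al by (simp add: less_max_iff_disj)
  have Vpos: "0 < v" if "v \<in> Vs ps" for v using that ps0 unfolding Vs_def by auto
  have Fmono: "Ff s \<le> Ff s'" if "s \<le> s'" for s s'
    unfolding Ff_def by (rule finite_measure_mono) (use that Et_sets[OF PS meas prds iH] in auto)
  have VF: "0 < Ff v" if "v \<in> Vs ps" for v
    using that cpos Fmono[of ps v] unfolding Vs_def by auto
  show intB: "integrable M (Bf ps)"
    unfolding Bf_def by (intro Bochner_Integration.integrable_sum Bochner_Integration.integrable_divide int_Z)
  show "AE \<omega> in M. (if i \<in> storey_rej alpha lam (\<lambda>j. p j \<omega>) then Wf lam (\<lambda>j. p j \<omega>) / thr alpha lam (\<lambda>j. p j \<omega>) else 0) \<le> Bf ps \<omega>"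
    using pmin_ae AE_space
  proof eventually_elim
    case (elim \<omega>)
    let ?x = "\<lambda>j. p j \<omega>"
    have nn: "0 \<le> indicator {\<omega> \<in> space M. p i \<omega> \<le> v} \<omega> * (Wf lam ?x * (if thr alpha lam ?x = v then 1 else 0)) / v" if "v \<in> Vs ps" for v
      using Vpos[OF that] W_bounds[of ?x] by (auto simp: indicator_def)
    show ?case
    proof (cases "i \<in> storey_rej alpha lam ?x")
      case False
      then show ?thesis unfolding Bf_def using nn by (simp add: sum_nonneg)
    next
      case True
      have l1: "alpha * (1 - lam) / real CARD('m) \<le> thr alpha lam ?x" and l2: "p i \<omega> \<le> thr alpha lam ?x"
        using thr_lb[OF al True] by auto
      have inV: "thr alpha lam ?x \<in> Vs ps"
        unfolding Vs_def ps_def using thr_in_V0[of ?x] l1 l2 elim by auto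
      have "(if i \<in> storey_rej alpha lam ?x then Wf lam ?x / thr alpha lam ?x else 0)
          = indicator {\<omega> \<in> space M. p i \<omega> \<le> thr alpha lam ?x} \<omega> * (Wf lam ?x * (if thr alpha lam ?x = thr alpha lam ?x then 1 else 0)) / thr alpha lam ?x"
        using True l2 elim by (simp add: indicator_def)
      also have "\<dots> \<le> Bf ps \<omega>"
        unfolding Bf_def by (rule member_le_sum[OF inV nn Vs_fin]) simp
      finally show ?thesis .
    qed
  qed
  have intB_eq: "(\<integral>\<omega>. Bf ps \<omega> \<partial>M) = (\<Sum>v\<in>Vs ps. Zf v / v)"
    unfolding Bf_def Zf_def
    by (subst Bochner_Integration.integral_sum) (auto intro: int_Z)
  have E_sets: "{\<omega> \<in> space M. p i \<omega> \<le> ps} \<in> sets M" by (rule Et_sets[OF PS meas prds iH])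
  have int_W: "integrable M (\<lambda>\<omega>. indicator {\<omega> \<in> space M. p i \<omega> \<le> ps} \<omega> * Wf lam (\<lambda>j. p j \<omega>))"
  proof (rule integrable_const_bound[where B=1])
    show "AE x in M. norm (indicator {\<omega> \<in> space M. p i \<omega> \<le> ps} x * Wf lam (\<lambda>j. p j x)) \<le> 1"
      by (intro AE_I2) (auto simp: indicator_def W_abs)
    show "(\<lambda>\<omega>. indicator {\<omega> \<in> space M. p i \<omega> \<le> ps} \<omega> * Wf lam (\<lambda>j. p j \<omega>)) \<in> borel_measurable M"
      by measurable
  qed
  have ce: "cond_exp_event M (\<lambda>\<omega>. 1 / (1 + real (storey_A lam (\<lambda>j. p j \<omega>)))) {\<omega> \<in> space M. p i \<omega> \<le> ps}
      = (\<integral>\<omega>. indicator {\<omega> \<in> space M. p i \<omega> \<le> ps} \<omega> * Wf lam (\<lambda>j. p j \<omega>) \<partial>M) / Ff ps"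
    unfolding cond_exp_event_def Wf_def Ff_def ..
  have ce0: "0 \<le> (\<integral>\<omega>. indicator {\<omega> \<in> space M. p i \<omega> \<le> ps} \<omega> * Wf lam (\<lambda>j. p j \<omega>) \<partial>M) / Ff ps"
    using cpos by (intro divide_nonneg_pos Bochner_Integration.integral_nonneg) (auto simp: indicator_def W_bounds)
  show "(\<integral>\<omega>. Bf ps \<omega> \<partial>M) \<le> cond_exp_event M (\<lambda>\<omega>. 1 / (1 + real (storey_A lam (\<lambda>j. p j \<omega>)))) {\<omega> \<in> space M. p i \<omega> \<le> ps}"
  proof (cases "Vs ps = {}")
    case True
    then show ?thesis unfolding intB_eq ce using ce0 by simp
  next
    case False
    let ?v = "Min (Vs ps)"
    have vin: "?v \<in> Vs ps" using False Vs_fin by simp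
    have psv: "ps \<le> ?v" using vin unfolding Vs_def by auto
    have "(\<Sum>v\<in>Vs ps. Zf v / v) \<le> Gf ?v ?v / Ff ?v"
      using IND[OF su Vs_fin] False Vpos VF by blast
    also have "\<dots> \<le> Gf ?v ps / Ff ps"
      unfolding Gf_def Ff_def by (rule MON) (use psv cpos Ff_def in auto)
    also have "\<dots> \<le> (\<integral>\<omega>. indicator {\<omega> \<in> space M. p i \<omega> \<le> ps} \<omega> * Wf lam (\<lambda>j. p j \<omega>) \<partial>M) / Ff ps"
    proof (rule divide_right_mono)
      show "Gf ?v ps \<le> (\<integral>\<omega>. indicator {\<omega> \<in> space M. p i \<omega> \<le> ps} \<omega> * Wf lam (\<lambda>j. p j \<omega>) \<partial>M)"
        unfolding Gf_def by (rule integral_mono[OF int_Gf int_W]) (auto simp: indicator_def W_bounds)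
    qed (use cpos in simp)
    finally show ?thesis unfolding intB_eq ce .
  qed
qed

end

lemma Wf_nonneg: "0 \<le> Wf lam x" unfolding Wf_def by simp

lemma fdp_bound:
  fixes x :: "'m::finite \<Rightarrow> real" and alpha lam :: real and H0 :: "'m set"
  assumes al: "0 < alpha" "alpha < 1" "0 < lam" "lam < 1"
  shows "real (card (storey_rej alpha lam x \<inter> H0)) / real (max 1 (card (storey_rej alpha lam x)))
    \<le> alpha * (1 - lam) * (\<Sum>i\<in>H0. if i \<in> storey_rej alpha lam x then Wf lam x / thr alpha lam x else 0)"
proof (cases "storey_rej alpha lam x = {}")
  case True then show ?thesis by simp
next
  case False
  let ?rej = "storey_rej alpha lam x"
  let ?R = "storey_R alpha lam x"
  let ?A = "storey_A lam x"
  obtain i where "i \<in> ?rej" using False by blast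
  then have R1: "1 \<le> ?R" by (rule rej_R[OF al])
  have cR: "?R \<le> card ?rej" by (rule card_rej[OF al R1])
  have c1: "alpha * (1 - lam) * (Wf lam x / thr alpha lam x) = 1 / real ?R"
    unfolding Wf_def thr_eq[OF al(4)] using al R1 by (simp add: field_simps)
  have "alpha * (1 - lam) * (\<Sum>i\<in>H0. if i \<in> ?rej then Wf lam x / thr alpha lam x else 0)
      = (\<Sum>i\<in>H0. if i \<in> ?rej then 1 / real ?R else 0)"
    unfolding sum_distrib_left by (intro sum.cong refl) (use c1 in simp)
  also have "\<dots> = real (card (?rej \<inter> H0)) / real ?R"
    by (simp add: sum.If_cases Int_commute)
  finally have eq: "alpha * (1 - lam) * (\<Sum>i\<in>H0. if i \<in> ?rej then Wf lam x / thr alpha lam x else 0)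
      = real (card (?rej \<inter> H0)) / real ?R" .
  have "real (card (?rej \<inter> H0)) / real (max 1 (card ?rej)) \<le> real (card (?rej \<inter> H0)) / real ?R"
    using R1 cR by (intro divide_left_mono) auto
  then show ?thesis using eq by simp
qed

theorem theorem7:
  fixes M :: "'a measure" and p :: "'m::finite \<Rightarrow> 'a \<Rightarrow> real" and H0 :: "'m set"
    and alpha lam pmin :: real
  assumes "prob_space M"
    and meas: "\<And>i. p i \<in> borel_measurable M"
    and pval: "\<And>i \<omega>. \<omega> \<in> space M \<Longrightarrow> 0 \<le> p i \<omega> \<and> p i \<omega> \<le> 1"
    and prds: "PRDS M (\<lambda>\<omega> i. p i \<omega>) H0"
    and superunif: "\<And>i t. i \<in> H0 \<Longrightarrow> 0 \<le> t \<Longrightarrow> t \<le> 1 \<Longrightarrow>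
                       measure M {\<omega> \<in> space M. p i \<omega> \<le> t} \<le> t"
    and pmin_ae: "\<And>i. i \<in> H0 \<Longrightarrow> AE \<omega> in M. pmin \<le> p i \<omega>"
    and "0 \<le> pmin" "pmin \<le> 1"
    and "0 < alpha" "alpha < 1" "0 < lam" "lam < 1"
    and cond_def: "\<And>i. i \<in> H0 \<Longrightarrow>
       measure M {\<omega> \<in> space M. p i \<omega> \<le> max (alpha * (1 - lam) / real CARD('m)) pmin} > 0"
  shows "(\<integral>\<omega>. real (card (storey_rej alpha lam (\<lambda>i. p i \<omega>) \<inter> H0))
               / real (max 1 (card (storey_rej alpha lam (\<lambda>i. p i \<omega>)))) \<partial>M)
         \<le> alpha * (1 - lam) *
           (\<Sum>i\<in>H0. cond_exp_event M (\<lambda>\<omega>. 1 / (1 + real (storey_A lam (\<lambda>j. p j \<omega>))))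
               {\<omega> \<in> space M. p i \<omega> \<le> max (alpha * (1 - lam) / real CARD('m)) pmin})"
proof -
  note PS = \<open>prob_space M\<close>
  interpret prob_space M by (rule PS)
  have al: "0 < alpha" "alpha < 1" "0 < lam" "lam < 1" by fact+
  define ps where "ps = max (alpha * (1 - lam) / real CARD('m)) pmin"
  define B where "B i = Bf M p i alpha lam ps" for i
  define X where "X i \<omega> = (if i \<in> storey_rej alpha lam (\<lambda>j. p j \<omega>) then Wf lam (\<lambda>j. p j \<omega>) / thr alpha lam (\<lambda>j. p j \<omega>) else 0)" for i \<omega>
  define ce where "ce i = cond_exp_event M (\<lambda>\<omega>. 1 / (1 + real (storey_A lam (\<lambda>j. p j \<omega>))))
               {\<omega> \<in> space M. p i \<omega> \<le> ps}" for i
  have hyps: "\<And>t. 0 \<le> t \<Longrightarrow> t \<le> 1 \<Longrightarrow> Ff M p i t \<le> t"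
     "AE \<omega> in M. pmin \<le> p i \<omega>" "0 < Ff M p i ps" if iH: "i \<in> H0" for i
    using superunif[OF iH] pmin_ae[OF iH] cond_def[OF iH]
    unfolding Ff_def[OF PS meas prds iH al] ps_def by auto
  have P1: "integrable M (B i)" if iH: "i \<in> H0" for i
    using PERi(1)[OF PS meas prds iH al hyps[OF iH, unfolded ps_def]] unfolding B_def ps_def .
  have P2: "AE \<omega> in M. X i \<omega> \<le> B i \<omega>" if iH: "i \<in> H0" for i
    using PERi(2)[OF PS meas prds iH al hyps[OF iH, unfolded ps_def]] unfolding B_def ps_def X_def .
  have P3: "(\<integral>\<omega>. B i \<omega> \<partial>M) \<le> ce i" if iH: "i \<in> H0" for i
    using PERi(3)[OF PS meas prds iH al hyps[OF iH, unfolded ps_def]] unfolding B_def ps_def ce_def .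
  have X0: "0 \<le> X i \<omega>" for i \<omega>
  proof -
    have "0 \<le> thr alpha lam (\<lambda>j. p j \<omega>)" unfolding thr_eq[OF al(4)] using al by simp
    then show ?thesis unfolding X_def using divide_nonneg_nonneg[OF Wf_nonneg[of lam "\<lambda>j. p j \<omega>"]] by simp
  qed
  have finH: "finite H0" by simp
  have AEall: "AE \<omega> in M. \<forall>i\<in>H0. X i \<omega> \<le> B i \<omega>"
    using P2 finH by (simp add: AE_finite_all)
  have intS: "integrable M (\<lambda>\<omega>. alpha * (1 - lam) * (\<Sum>i\<in>H0. B i \<omega>))"
    using P1 by (intro Bochner_Integration.integrable_mult_right Bochner_Integration.integrable_sum) auto
  have "(\<integral>\<omega>. real (card (storey_rej alpha lam (\<lambda>i. p i \<omega>) \<inter> H0))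
               / real (max 1 (card (storey_rej alpha lam (\<lambda>i. p i \<omega>)))) \<partial>M)
      \<le> (\<integral>\<omega>. alpha * (1 - lam) * (\<Sum>i\<in>H0. B i \<omega>) \<partial>M)"
  proof (rule integral_mono_AE'[OF intS])
    show "AE \<omega> in M. real (card (storey_rej alpha lam (\<lambda>i. p i \<omega>) \<inter> H0))
               / real (max 1 (card (storey_rej alpha lam (\<lambda>i. p i \<omega>)))) \<le> alpha * (1 - lam) * (\<Sum>i\<in>H0. B i \<omega>)"
      using AEall
    proof eventually_elim
      case (elim \<omega>)
      have "real (card (storey_rej alpha lam (\<lambda>i. p i \<omega>) \<inter> H0))
               / real (max 1 (card (storey_rej alpha lam (\<lambda>i. p i \<omega>)))) \<le> alpha * (1 - lam) * (\<Sum>i\<in>H0. X i \<omega>)"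
        using fdp_bound[OF al, of "\<lambda>i. p i \<omega>" H0] unfolding X_def by simp
      also have "\<dots> \<le> alpha * (1 - lam) * (\<Sum>i\<in>H0. B i \<omega>)"
        using elim al by (intro mult_left_mono sum_mono) auto
      finally show ?case .
    qed
    show "AE \<omega> in M. 0 \<le> alpha * (1 - lam) * (\<Sum>i\<in>H0. B i \<omega>)"
      using AEall
    proof eventually_elim
      case (elim \<omega>)
      have "0 \<le> (\<Sum>i\<in>H0. B i \<omega>)" using elim X0 by (intro sum_nonneg) (meson order_trans)
      then show ?case using al by simp
    qed
  qed
  also have "\<dots> = alpha * (1 - lam) * (\<Sum>i\<in>H0. (\<integral>\<omega>. B i \<omega> \<partial>M))"
    using P1 by (simp add: Bochner_Integration.integral_sum)
  also have "\<dots> \<le> alpha * (1 - lam) * (\<Sum>i\<in>H0. ce i)"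
    using P3 al by (intro mult_left_mono sum_mono) auto
  finally show ?thesis unfolding ce_def ps_def .
qed


end
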